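(* Let $n \ge 1$, let $F \in \mathbb{C}^{n \times n}$ be a unitary matrix with $|F_{ij}|^2 \leq \frac{c}{n}$ for all $i,j$ (for some constant $c>0$), let $I \in \mathbb{C}^{n\times n}$ be the identity matrix, and let $A = [F \enspace I] \in \mathbb{C}^{n \times 2n}$. Let $y = F\hat{x} + e$, where $\hat{x}, e \in \mathbb{C}^n$ and $e$ is $t$-sparse. Let $1 \leq k \leq n$ be an integer, let $T$ be a positive integer, and let $x^{[T+1]} = \mathrm{IHT}(y,A,k,t,T)$ be the output of the $(k,t)$-Iterative Hard Thresholding algorithm described in the context. Write $x^{[T+1]} = [\hat{x}^{[T+1]} \enspace e^{[T+1]}]^T$ with $\hat{x}^{[T+1]}, e^{[T+1]} \in \mathbb{C}^n$. (a) Define $\rho := \sqrt{27}\sqrt{\frac{ckt}{n}}$ and $\tau$ by $\tau(1-\rho) := \sqrt{3}\sqrt{1 + 2\sqrt{\frac{ckt}{n}}}$. If $0<\rho<1$, then $$\| \hat{x}^{[T+1]} - \hat{x}_{h(k)} \|_2 \leq \rho^{T+1} \sqrt{ \| \hat{x}_{h(k)} \|_2^2 + \|e\|_2^2 } + \tau\| \hat{x}_{t(k)} \|_2 .$$ Moreover, for any $0<\epsilon<1$ and any $T \geq \frac{\log(1/\epsilon) + \log\left(\sqrt{ \| \hat{x}_{h(k)} \|_2^2 + \|e\|_2^2 }\right)}{\log(1/\rho)}$, we have $\| \hat{x}^{[T+1]} - \hat{x}_{h(k)} \|_2 \leq \tau\| \hat{x}_{t(k)} \|_2 + \epsilon$.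 (b) Define instead $\rho := 2\sqrt{2}\sqrt{\frac{ckt}{n}}$ and $\tau$ by $\tau(1-\rho) := 2$. If $0<\rho<1$, then $$\| \hat{x}^{[T+1]} - \hat{x}_{h(k)} \|_2 \leq \rho^{T+1}\| \hat{x}_{h(k)}\|_2 + \tau\left(\|\hat{x}_{t(k)}\|_2 + \|e\|_2\right).$$ Moreover, for any $0<\epsilon<1$ and any $T \geq \frac{\log(1/\epsilon) + \log(\| \hat{x}_{h(k)}\|_2)}{\log(1/\rho)}$, we have $\| \hat{x}^{[T+1]} - \hat{x}_{h(k)} \|_2 \leq \tau\left(\|\hat{x}_{t(k)}\|_2 + \|e\|_2\right) + \epsilon$.
   Context: A vector is $k$-sparse if it has at most $k$ nonzero entries. For $x \in \mathbb{C}^n$, $x_{h(k)}$ denotes a $k$-sparse vector in $\mathbb{C}^n$ consisting of $k$ largest (in absolute value) entries of $x$ with all other entries set to zero (ties broken by a fixed predefined rule), and $x_{t(k)} := x - x_{h(k)}$. For $x = [x_1 \enspace x_2]^T \in \mathbb{C}^{2n}$ with $x_1,x_2\in\mathbb{C}^n$, $x_{h(k,t)} := [ (x_1)_{h(k)} \enspace (x_2)_{h(t)} ]^T$. The $(k,t)$-Iterative Hard Thresholding algorithm $\mathrm{IHT}(y,A,k,t,T)$, for $y\in\mathbb{C}^n$, $A \in \mathbb{C}^{n\times 2n}$ and positive integers $k,t,T$: set $x^{[0]} = 0 \in \mathbb{C}^{2n}$; for $i = 0,1,\dots,T$ set $z^{[i+1]} = x^{[i]} + A^*(y - Ax^{[i]})$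 and $x^{[i+1]} = (z^{[i+1]})_{h(k,t)}$; return $x^{[T+1]}$. Here $A^*$ is the conjugate transpose. *)

theory Defs
  imports "HOL-Analysis.Analysis"
begin

text \<open>Vectors in C^m are represented as functions nat => complex, only the
entries with index < m being relevant; matrices as nat => nat => complex.\<close>

definition l2norm :: "nat \<Rightarrow> (nat \<Rightarrow> complex) \<Rightarrow> real" where
  "l2norm m x = sqrt (\<Sum>i<m. (cmod (x i))\<^sup>2)"

definition mat_vec :: "nat \<Rightarrow> (nat \<Rightarrow> nat \<Rightarrow> complex) \<Rightarrow> (nat \<Rightarrow> complex) \<Rightarrow> (nat \<Rightarrow> complex)" where
  "mat_vec p M x = (\<lambda>i. \<Sum>j<p. M i j * x j)"

definition adj :: "(nat \<Rightarrow> nat \<Rightarrow> complex) \<Rightarrow> (nat \<Rightarrow> nat \<Rightarrow> complex)" where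
  "adj M = (\<lambda>i j. cnj (M j i))"

definition unitary_mat :: "nat \<Rightarrow> (nat \<Rightarrow> nat \<Rightarrow> complex) \<Rightarrow> bool" where
  "unitary_mat n F \<longleftrightarrow>
     (\<forall>i<n. \<forall>j<n. (\<Sum>l<n. cnj (F l i) * F l j) = (if i = j then 1 else 0))"

definition block_FI :: "nat \<Rightarrow> (nat \<Rightarrow> nat \<Rightarrow> complex) \<Rightarrow> (nat \<Rightarrow> nat \<Rightarrow> complex)" where
  "block_FI n F = (\<lambda>i j. if j < n then F i j else if j - n = i then 1 else 0)"

definition thr_rule :: "nat \<Rightarrow> ((nat \<Rightarrow> complex) \<Rightarrow> nat \<Rightarrow> nat set) \<Rightarrow> bool" where
  "thr_rule n sel \<longleftrightarrow>
     (\<forall>x k. sel x k \<subseteq> {..<n} \<and> card (sel x k) = min k n \<and>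
        (\<forall>i\<in>sel x k. \<forall>j<n. j \<notin> sel x k \<longrightarrow> cmod (x j) \<le> cmod (x i)))"

definition hk :: "((nat \<Rightarrow> complex) \<Rightarrow> nat \<Rightarrow> nat set) \<Rightarrow> nat \<Rightarrow> (nat \<Rightarrow> complex) \<Rightarrow> (nat \<Rightarrow> complex)" where
  "hk sel k x = (\<lambda>i. if i \<in> sel x k then x i else 0)"

definition tk :: "((nat \<Rightarrow> complex) \<Rightarrow> nat \<Rightarrow> nat set) \<Rightarrow> nat \<Rightarrow> (nat \<Rightarrow> complex) \<Rightarrow> (nat \<Rightarrow> complex)" where
  "tk sel k x = (\<lambda>i. x i - hk sel k x i)"

text \<open>x_{h(k,t)} for x = [x1 x2] in C^{2n}: x1 = x(0..n-1), x2 = x(n..2n-1).\<close>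
definition hkt :: "nat \<Rightarrow> ((nat \<Rightarrow> complex) \<Rightarrow> nat \<Rightarrow> nat set) \<Rightarrow> nat \<Rightarrow> nat \<Rightarrow> (nat \<Rightarrow> complex) \<Rightarrow> (nat \<Rightarrow> complex)" where
  "hkt n sel k t x = (\<lambda>i. if i < n then hk sel k x i
                          else if i < 2 * n then hk sel t (\<lambda>j. x (n + j)) (i - n)
                          else 0)"

definition iht_step :: "nat \<Rightarrow> ((nat \<Rightarrow> complex) \<Rightarrow> nat \<Rightarrow> nat set) \<Rightarrow> (nat \<Rightarrow> complex) \<Rightarrow>
    (nat \<Rightarrow> nat \<Rightarrow> complex) \<Rightarrow> nat \<Rightarrow> nat \<Rightarrow> (nat \<Rightarrow> complex) \<Rightarrow> (nat \<Rightarrow> complex)" where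
  "iht_step n sel y A k t x =
     hkt n sel k t (\<lambda>i. x i + mat_vec n (adj A) (\<lambda>r. y r - mat_vec (2 * n) A x r) i)"

text \<open>IHT(y,A,k,t,T): x^{[0]} = 0, iterations i = 0..T, return x^{[T+1]}.\<close>
definition IHT :: "nat \<Rightarrow> ((nat \<Rightarrow> complex) \<Rightarrow> nat \<Rightarrow> nat set) \<Rightarrow> (nat \<Rightarrow> complex) \<Rightarrow>
    (nat \<Rightarrow> nat \<Rightarrow> complex) \<Rightarrow> nat \<Rightarrow> nat \<Rightarrow> nat \<Rightarrow> (nat \<Rightarrow> complex)" where
  "IHT n sel y A k t T = (iht_step n sel y A k t ^^ Suc T) (\<lambda>_. 0)"

end

theory Submission imports Defs begin

definition nm :: "nat set \<Rightarrow> (nat \<Rightarrow> complex) \<Rightarrow> real" where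
  "nm A x = L2_set (\<lambda>i. cmod (x i)) A"

lemma nm_nonneg[simp]: "0 \<le> nm A x"
  unfolding nm_def by simp

lemma l2norm_nm: "l2norm n x = nm {..<n} x"
  unfolding l2norm_def nm_def L2_set_def by simp

lemma nm_sq: "(nm A x)\<^sup>2 = (\<Sum>i\<in>A. (cmod (x i))\<^sup>2)"
  unfolding nm_def L2_set_def by (simp add: sum_nonneg)

lemma nm_cong: "(\<And>i. i \<in> A \<Longrightarrow> x i = y i) \<Longrightarrow> nm A x = nm A y"
  unfolding nm_def by (rule L2_set_cong) auto

lemma nm_triangle: "nm A (\<lambda>i. x i + y i) \<le> nm A x + nm A y"
proof -
  have "nm A (\<lambda>i. x i + y i) \<le> L2_set (\<lambda>i. cmod (x i) + cmod (y i)) A"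
    unfolding nm_def by (rule L2_set_mono) (auto simp: norm_triangle_ineq)
  also have "\<dots> \<le> nm A x + nm A y" unfolding nm_def by (rule L2_set_triangle_ineq)
  finally show ?thesis .
qed

lemma nm_triangle_diff: "nm A (\<lambda>i. x i - y i) \<le> nm A x + nm A y"
proof -
  have "nm A (\<lambda>i. x i - y i) \<le> L2_set (\<lambda>i. cmod (x i) + cmod (y i)) A"
    unfolding nm_def by (rule L2_set_mono) (auto simp: norm_triangle_ineq4)
  also have "\<dots> \<le> nm A x + nm A y" unfolding nm_def by (rule L2_set_triangle_ineq)
  finally show ?thesis .
qed

lemma nm_subset: assumes "finite B" "A \<subseteq> B" shows "nm A x \<le> nm B x"
  unfolding nm_def L2_set_def
  by (rule real_sqrt_le_mono, rule sum_mono2) (use assms in auto)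

lemma nm_zero_outside: assumes "finite B" "A \<subseteq> B" "\<And>i. i \<in> B - A \<Longrightarrow> x i = 0"
  shows "nm B x = nm A x"
  unfolding nm_def L2_set_def
  by (rule arg_cong[where f=sqrt], rule sum.mono_neutral_right) (use assms in auto)

lemma nm_mono: "(\<And>i. i \<in> A \<Longrightarrow> cmod (x i) \<le> cmod (y i)) \<Longrightarrow> nm A x \<le> nm A y"
  unfolding nm_def by (rule L2_set_mono) auto

lemma cs_complex: "cmod (\<Sum>i\<in>A. cnj (a i) * b i) \<le> nm A a * nm A b"
proof -
  have "cmod (\<Sum>i\<in>A. cnj (a i) * b i) \<le> (\<Sum>i\<in>A. cmod (cnj (a i) * b i))"
    by (rule norm_sum)
  also have "\<dots> = (\<Sum>i\<in>A. \<bar>cmod (a i)\<bar> * \<bar>cmod (b i)\<bar>)"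
    by (simp add: norm_mult)
  also have "\<dots> \<le> nm A a * nm A b" unfolding nm_def by (rule L2_set_mult_ineq)
  finally show ?thesis .
qed

lemma sum_cmod_le: "(\<Sum>i\<in>A. cmod (d i)) \<le> sqrt (real (card A)) * nm A d"
proof -
  have "(\<Sum>i\<in>A. cmod (d i)) = (\<Sum>i\<in>A. \<bar>1::real\<bar> * \<bar>cmod (d i)\<bar>)" by simp
  also have "\<dots> \<le> L2_set (\<lambda>_. 1::real) A * nm A d" unfolding nm_def by (rule L2_set_mult_ineq)
  also have "\<dots> = sqrt (real (card A)) * nm A d" by (simp add: L2_set_constant)
  finally show ?thesis .
qed

lemma nm_const_bound: assumes "\<And>i. i \<in> A \<Longrightarrow> cmod (x i) \<le> K"
  shows "nm A x \<le> sqrt (real (card A)) * K"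
proof (cases "A = {}")
  case True then show ?thesis by (simp add: nm_def)
next
  case False
  then obtain i where "i \<in> A" by auto
  then have K: "0 \<le> K" using assms[of i] norm_ge_zero order_trans by blast
  have "nm A x \<le> L2_set (\<lambda>_. K) A" unfolding nm_def by (rule L2_set_mono) (use assms in auto)
  also have "\<dots> = sqrt (real (card A)) * K" using K by (simp add: L2_set_constant)
  finally show ?thesis .
qed


lemma sq_le_mult_imp: fixes x y :: real assumes "x\<^sup>2 \<le> x * y" "0 \<le> x" "0 \<le> y" shows "x \<le> y"
proof (rule ccontr)
  assume "\<not> x \<le> y"
  then have "y < x" by simp
  then have "x * y < x * x" using assms by (intro mult_strict_left_mono) auto
  then show False using assms by (simp add: power2_eq_square)
qed

lemma coh_bound:
  assumes coh: "\<forall>i<n. \<forall>j<n. (cmod (G i j))\<^sup>2 \<le> c / real n"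
    and Q: "Q \<subseteq> {..<n}" and P: "P \<subseteq> {..<n}" and d: "\<forall>l<n. l \<notin> P \<longrightarrow> d l = 0" and c0: "0 \<le> c / real n"
  shows "nm Q (mat_vec n G d) \<le> sqrt (c / real n * card Q * card P) * nm {..<n} d"
proof -
  have fP: "finite P" using P finite_subset by blast
  have "cmod (mat_vec n G d i) \<le> sqrt (c / real n) * (sqrt (real (card P)) * nm {..<n} d)"
    if i: "i \<in> Q" for i
  proof -
    have "mat_vec n G d i = (\<Sum>l\<in>P. G i l * d l)"
      unfolding mat_vec_def by (rule sum.mono_neutral_right) (use P d fP in auto)
    then have "cmod (mat_vec n G d i) \<le> (\<Sum>l\<in>P. cmod (G i l) * cmod (d l))"
      by (simp add: norm_sum norm_mult order_trans[OF norm_sum])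
    also have "\<dots> \<le> (\<Sum>l\<in>P. sqrt (c / real n) * cmod (d l))"
    proof (rule sum_mono)
      fix l assume "l \<in> P"
      then have "(cmod (G i l))\<^sup>2 \<le> c / real n" using coh i Q P by auto
      then have "cmod (G i l) \<le> sqrt (c / real n)" by (simp add: real_le_rsqrt)
      then show "cmod (G i l) * cmod (d l) \<le> sqrt (c / real n) * cmod (d l)"
        by (simp add: mult_right_mono)
    qed
    also have "\<dots> = sqrt (c / real n) * (\<Sum>l\<in>P. cmod (d l))" by (simp add: sum_distrib_left)
    also have "\<dots> \<le> sqrt (c / real n) * (sqrt (real (card P)) * nm P d)"
      by (rule mult_left_mono[OF sum_cmod_le]) (simp add: c0)
    also have "\<dots> \<le> sqrt (c / real n) * (sqrt (real (card P)) * nm {..<n} d)"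
      by (intro mult_left_mono nm_subset) (use P c0 in auto)
    finally show ?thesis .
  qed
  then have "nm Q (mat_vec n G d) \<le> sqrt (real (card Q)) * (sqrt (c / real n) * (sqrt (real (card P)) * nm {..<n} d))"
    by (rule nm_const_bound)
  also have "\<dots> = sqrt (c / real n * card Q * card P) * nm {..<n} d"
    by (simp only: real_sqrt_mult mult_ac)
  finally show ?thesis .
qed

lemma adj_identity:
  "(\<Sum>r<n. cnj (mat_vec n F w r) * v r) = (\<Sum>i<n. cnj (w i) * mat_vec n (adj F) v i)"
proof -
  have "(\<Sum>r<n. cnj (mat_vec n F w r) * v r) = (\<Sum>r<n. \<Sum>i<n. cnj (F r i) * cnj (w i) * v r)"
    by (simp add: mat_vec_def sum_distrib_right)
  also have "\<dots> = (\<Sum>i<n. \<Sum>r<n. cnj (F r i) * cnj (w i) * v r)" by (rule sum.swap)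
  also have "\<dots> = (\<Sum>i<n. cnj (w i) * mat_vec n (adj F) v i)"
    by (simp add: mat_vec_def adj_def sum_distrib_left mult_ac)
  finally show ?thesis .
qed

lemma unitary_inv:
  assumes U: "unitary_mat n F" and j: "j < n"
  shows "mat_vec n (adj F) (mat_vec n F d) j = d j"
proof -
  have "mat_vec n (adj F) (mat_vec n F d) j = (\<Sum>r<n. \<Sum>l<n. cnj (F r j) * F r l * d l)"
    by (simp add: mat_vec_def adj_def sum_distrib_left mult_ac)
  also have "\<dots> = (\<Sum>l<n. \<Sum>r<n. cnj (F r j) * F r l * d l)" by (rule sum.swap)
  also have "\<dots> = (\<Sum>l<n. (\<Sum>r<n. cnj (F r j) * F r l) * d l)" by (simp add: sum_distrib_right)
  also have "\<dots> = (\<Sum>l<n. (if j = l then d l else 0))"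
    using U j unfolding unitary_mat_def by (intro sum.cong) auto
  also have "\<dots> = d j" using j by simp
  finally show ?thesis .
qed

lemma nm_sq_complex: "complex_of_real ((nm A x)\<^sup>2) = (\<Sum>i\<in>A. cnj (x i) * x i)"
  unfolding nm_sq of_real_sum
proof (intro sum.cong refl)
  fix i show "complex_of_real ((cmod (x i))\<^sup>2) = cnj (x i) * x i"
    using complex_norm_square[of "x i"] by (simp only: mult.commute)
qed

lemma unitary_iso:
  assumes U: "unitary_mat n F"
  shows "nm {..<n} (mat_vec n F w) = nm {..<n} w"
proof -
  have "complex_of_real ((nm {..<n} (mat_vec n F w))\<^sup>2) = (\<Sum>i<n. cnj (w i) * mat_vec n (adj F) (mat_vec n F w) i)"
    unfolding nm_sq_complex by (rule adj_identity)
  also have "\<dots> = complex_of_real ((nm {..<n} w)\<^sup>2)"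
    unfolding nm_sq_complex using unitary_inv[OF U] by simp
  finally have "(nm {..<n} (mat_vec n F w))\<^sup>2 = (nm {..<n} w)\<^sup>2" by (simp only: of_real_eq_iff)
  then show ?thesis by (simp add: power2_eq_iff_nonneg)
qed

lemma duality:
  assumes U: "unitary_mat n F" and T: "T \<subseteq> {..<n}"
  shows "nm T (mat_vec n (adj F) v) \<le> nm {..<n} v"
proof -
  define g where "g = mat_vec n (adj F) v"
  define w where "w = (\<lambda>i. if i \<in> T then g i else 0)"
  have e1: "nm T g = nm {..<n} w"
    using nm_zero_outside[of "{..<n}" T w] T by (auto simp: w_def intro: nm_cong)
  have "complex_of_real ((nm {..<n} w)\<^sup>2) = (\<Sum>i<n. cnj (w i) * g i)"
    unfolding nm_sq_complex by (intro sum.cong) (auto simp: w_def)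
  also have "\<dots> = (\<Sum>r<n. cnj (mat_vec n F w r) * v r)"
    unfolding g_def by (rule adj_identity[symmetric])
  finally have "(nm {..<n} w)\<^sup>2 = Re (\<Sum>r<n. cnj (mat_vec n F w r) * v r)"
    by (metis Re_complex_of_real)
  also have "\<dots> \<le> cmod (\<Sum>r<n. cnj (mat_vec n F w r) * v r)" by (rule complex_Re_le_cmod)
  also have "\<dots> \<le> nm {..<n} (mat_vec n F w) * nm {..<n} v" by (rule cs_complex)
  also have "\<dots> = nm {..<n} w * nm {..<n} v" using unitary_iso[OF U] by simp
  finally have "nm {..<n} w \<le> nm {..<n} v" by (rule sq_le_mult_imp) auto
  then show ?thesis using e1 g_def by simp
qed


lemma sum_dom:
  fixes f :: "nat \<Rightarrow> real"
  assumes "finite A" "finite B" "card A \<le> card B" "\<And>a b. a \<in> A \<Longrightarrow> b \<in> B \<Longrightarrow> f a \<le> f b"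
    "\<And>b. b \<in> B \<Longrightarrow> 0 \<le> f b"
  shows "sum f A \<le> sum f B"
proof (cases "A = {}")
  case True then show ?thesis using assms by (simp add: sum_nonneg)
next
  case False
  then have "card A > 0" using assms by auto
  then have "B \<noteq> {}" using assms by auto
  define m where "m = Min (f ` B)"
  have m0: "0 \<le> m" unfolding m_def using assms \<open>B \<noteq> {}\<close> by auto
  have "sum f A \<le> sum (\<lambda>_. m) A"
    by (rule sum_mono) (use assms \<open>B \<noteq> {}\<close> in \<open>auto simp: m_def\<close>)
  also have "\<dots> = real (card A) * m" by simp
  also have "\<dots> \<le> real (card B) * m" using assms m0 by (intro mult_right_mono) auto
  also have "\<dots> = sum (\<lambda>_. m) B" by simp
  also have "\<dots> \<le> sum f B" by (rule sum_mono) (use assms in \<open>auto simp: m_def\<close>)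
  finally show ?thesis .
qed

lemma two_sq_bound: fixes a b :: real shows "(a + b)\<^sup>2 \<le> 2 * a\<^sup>2 + 2 * b\<^sup>2"
proof -
  have "0 \<le> (a - b)\<^sup>2" by simp
  then show ?thesis by (simp add: power2_eq_square algebra_simps)
qed

lemma thr_bound:
  assumes sel: "thr_rule n sel" and S0: "S0 \<subseteq> {..<n}" and cS0: "card S0 \<le> min kk n"
    and z: "\<forall>i<n. i \<notin> S0 \<longrightarrow> z i = 0"
  shows "(nm {..<n} (\<lambda>i. hk sel kk u i - z i))\<^sup>2 \<le> 3 * (nm (S0 \<union> sel u kk) (\<lambda>i. u i - z i))\<^sup>2"
proof -
  define S' where "S' = sel u kk"
  have S': "S' \<subseteq> {..<n}" "card S' = min kk n"
    and dom: "\<And>i j. i \<in> S' \<Longrightarrow> j < n \<Longrightarrow> j \<notin> S' \<Longrightarrow> cmod (u j) \<le> cmod (u i)"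
    using sel unfolding thr_rule_def S'_def by blast+
  have fS0: "finite S0" and fS': "finite S'" using S0 S' finite_subset by blast+
  define f where "f i = (cmod (hk sel kk u i - z i))\<^sup>2" for i
  define g where "g i = (cmod (u i - z i))\<^sup>2" for i
  have hk: "hk sel kk u i = (if i \<in> S' then u i else 0)" for i by (simp add: hk_def S'_def)
  have "(nm {..<n} (\<lambda>i. hk sel kk u i - z i))\<^sup>2 = sum f {..<n}" by (simp add: nm_sq f_def)
  also have "\<dots> = sum f (S' \<union> (S0 - S'))"
    by (rule sum.mono_neutral_right) (use S0 S' z in \<open>auto simp: f_def hk\<close>)
  also have "\<dots> = sum f S' + sum f (S0 - S')"
    by (rule sum.union_disjoint) (use fS0 fS' in auto)
  also have "sum f S' = sum g S'" by (rule sum.cong) (auto simp: f_def g_def hk)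
  finally have e1: "(nm {..<n} (\<lambda>i. hk sel kk u i - z i))\<^sup>2 = sum g S' + sum f (S0 - S')" .
  have "sum f (S0 - S') \<le> sum (\<lambda>i. 2 * g i + 2 * (cmod (u i))\<^sup>2) (S0 - S')"
  proof (rule sum_mono)
    fix i assume i: "i \<in> S0 - S'"
    have "cmod (z i) \<le> cmod (u i - z i) + cmod (u i)"
      using norm_triangle_ineq4[of "u i" "u i - z i"] by simp
    then have "(cmod (z i))\<^sup>2 \<le> (cmod (u i - z i) + cmod (u i))\<^sup>2" by (simp add: power_mono)
    also have "\<dots> \<le> 2 * (cmod (u i - z i))\<^sup>2 + 2 * (cmod (u i))\<^sup>2"
      by (rule two_sq_bound)
    finally show "f i \<le> 2 * g i + 2 * (cmod (u i))\<^sup>2" using i by (simp add: f_def g_def hk)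
  qed
  also have "\<dots> = 2 * sum g (S0 - S') + 2 * sum (\<lambda>i. (cmod (u i))\<^sup>2) (S0 - S')"
    by (simp add: sum.distrib sum_distrib_left)
  finally have e2: "sum f (S0 - S') \<le> 2 * sum g (S0 - S') + 2 * sum (\<lambda>i. (cmod (u i))\<^sup>2) (S0 - S')" .
  have "sum (\<lambda>i. (cmod (u i))\<^sup>2) (S0 - S') \<le> sum (\<lambda>i. (cmod (u i))\<^sup>2) (S' - S0)"
  proof (rule sum_dom)
    have "card (S0 - S') = card S0 - card (S0 \<inter> S')" by (rule card_Diff_subset_Int) (use fS0 in auto)
    moreover have "card (S' - S0) = card S' - card (S' \<inter> S0)" by (rule card_Diff_subset_Int) (use fS' in auto)
    ultimately show "card (S0 - S') \<le> card (S' - S0)" using cS0 S' by (simp add: Int_commute min_def split: if_splits)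
  next
    fix a b assume "a \<in> S0 - S'" "b \<in> S' - S0"
    then show "(cmod (u a))\<^sup>2 \<le> (cmod (u b))\<^sup>2" using dom[of b a] S0 by (auto intro: power_mono)
  qed (use fS0 fS' in auto)
  also have "sum (\<lambda>i. (cmod (u i))\<^sup>2) (S' - S0) = sum g (S' - S0)"
    by (rule sum.cong) (use z S' in \<open>auto simp: g_def\<close>)
  finally have e3: "sum (\<lambda>i. (cmod (u i))\<^sup>2) (S0 - S') \<le> sum g (S' - S0)" .
  have e4: "sum g (S' - S0) \<le> sum g S'" by (rule sum_mono2) (auto simp: fS' g_def)
  have g0: "0 \<le> sum g (S0 - S')" by (simp add: g_def sum_nonneg)
  have "(nm {..<n} (\<lambda>i. hk sel kk u i - z i))\<^sup>2 \<le> 3 * (sum g S' + sum g (S0 - S'))"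
    using e1 e2 e3 e4 g0 by (simp only: distrib_left)
  also have "sum g S' + sum g (S0 - S') = sum g (S0 \<union> S')"
    by (subst sum.union_disjoint[symmetric]) (use fS0 fS' in \<open>auto intro: sum.cong\<close>)
  also have "\<dots> = (nm (S0 \<union> sel u kk) (\<lambda>i. u i - z i))\<^sup>2" by (simp add: nm_sq g_def S'_def)
  finally show ?thesis by simp
qed


lemma nm_minus_commute: "nm A (\<lambda>i. a i - b i) = nm A (\<lambda>i. b i - a i)"
  unfolding nm_def by (simp add: norm_minus_commute)

lemma mv_add: "mat_vec p M (\<lambda>l. a l + b l) r = mat_vec p M a r + mat_vec p M b r"
  by (simp add: mat_vec_def algebra_simps sum.distrib)

lemma mv_diff: "mat_vec p M (\<lambda>l. a l - b l) r = mat_vec p M a r - mat_vec p M b r"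
  by (simp add: mat_vec_def algebra_simps sum_subtractf)

lemma mv_cong: "(\<And>l. l < p \<Longrightarrow> a l = b l) \<Longrightarrow> mat_vec p M a r = mat_vec p M b r"
  by (simp add: mat_vec_def)

lemma mv_A:
  assumes r: "r < n"
  shows "mat_vec (2 * n) (block_FI n F) x r = mat_vec n F x r + x (n + r)"
proof -
  have "mat_vec (2 * n) (block_FI n F) x r =
        (\<Sum>j<2*n. (if j < n then F r j * x j else 0) + (if j = n + r then x j else 0))"
    unfolding mat_vec_def by (intro sum.cong) (auto simp: block_FI_def)
  also have "\<dots> = (\<Sum>j<2*n. (if j < n then F r j * x j else 0)) + (\<Sum>j<2*n. (if j = n + r then x j else 0))"
    by (rule sum.distrib)
  also have "(\<Sum>j<2*n. (if j < n then F r j * x j else 0)) = (\<Sum>j<n. F r j * x j)"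
    by (rule sum.mono_neutral_cong_right) auto
  also have "(\<Sum>j<2*n. (if j = n + r then x j else 0)) = x (n + r)"
    using r by simp
  finally show ?thesis by (simp add: mat_vec_def)
qed

lemma mv_adjA1:
  assumes "i < n"
  shows "mat_vec n (adj (block_FI n F)) v i = mat_vec n (adj F) v i"
  using assms by (simp add: mat_vec_def adj_def block_FI_def)

lemma mv_adjA2:
  assumes "j < n"
  shows "mat_vec n (adj (block_FI n F)) v (n + j) = v j"
proof -
  have "mat_vec n (adj (block_FI n F)) v (n + j) = (\<Sum>r<n. if r = j then v r else 0)"
    unfolding mat_vec_def adj_def block_FI_def by (intro sum.cong) auto
  also have "\<dots> = v j" using assms by simp
  finally show ?thesis .
qed

lemma hkt1: "j < n \<Longrightarrow> hkt n sel k t z j = hk sel k z j"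
  by (simp add: hkt_def)

lemma hkt2: "j < n \<Longrightarrow> hkt n sel k t z (n + j) = hk sel t (\<lambda>j. z (n + j)) j"
  by (simp add: hkt_def)

context
  fixes n k t :: nat and c :: real and F :: "nat \<Rightarrow> nat \<Rightarrow> complex"
    and xhat e :: "nat \<Rightarrow> complex" and sel :: "(nat \<Rightarrow> complex) \<Rightarrow> nat \<Rightarrow> nat set"
  assumes U: "unitary_mat n F"
begin

lemma step_z1:
  assumes j: "j < n"
  shows "x j + mat_vec n (adj (block_FI n F))
            (\<lambda>r. (mat_vec n F xhat r + e r) - mat_vec (2 * n) (block_FI n F) x r) j
         = hk sel k xhat j + mat_vec n (adj F)
            (\<lambda>r. mat_vec n F (tk sel k xhat) r + e r - x (n + r)) j"
proof -
  let ?xh = "hk sel k xhat" and ?xt = "tk sel k xhat"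
  have "mat_vec n (adj (block_FI n F))
            (\<lambda>r. (mat_vec n F xhat r + e r) - mat_vec (2 * n) (block_FI n F) x r) j
        = mat_vec n (adj F) (\<lambda>r. mat_vec n F (\<lambda>l. ?xh l - x l) r
              + (mat_vec n F ?xt r + e r - x (n + r))) j"
  proof -
    have "\<And>r. r < n \<Longrightarrow> (mat_vec n F xhat r + e r) - mat_vec (2 * n) (block_FI n F) x r
        = mat_vec n F (\<lambda>l. ?xh l - x l) r + (mat_vec n F ?xt r + e r - x (n + r))"
    proof -
      fix r assume r: "r < n"
      have "xhat = (\<lambda>l. ?xh l + ?xt l)" by (simp add: tk_def)
      then have "mat_vec n F xhat r = mat_vec n F ?xh r + mat_vec n F ?xt r"
        by (metis mv_add)
      then show "(mat_vec n F xhat r + e r) - mat_vec (2 * n) (block_FI n F) x r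
        = mat_vec n F (\<lambda>l. ?xh l - x l) r + (mat_vec n F ?xt r + e r - x (n + r))"
        using mv_A[OF r, of F x] by (simp add: mv_diff)
    qed
    note H = this
    show ?thesis
      by (subst mv_adjA1[OF j], rule mv_cong, rule H)
  
  qed
  also have "\<dots> = mat_vec n (adj F) (mat_vec n F (\<lambda>l. ?xh l - x l)) j
      + mat_vec n (adj F) (\<lambda>r. mat_vec n F ?xt r + e r - x (n + r)) j"
    by (rule mv_add)
  also have "mat_vec n (adj F) (mat_vec n F (\<lambda>l. ?xh l - x l)) j = ?xh j - x j"
    using unitary_inv[OF U j] .
  finally show ?thesis by simp
qed

lemma step_z2:
  assumes j: "j < n"
  shows "x (n + j) + mat_vec n (adj (block_FI n F))
            (\<lambda>r. (mat_vec n F xhat r + e r) - mat_vec (2 * n) (block_FI n F) x r) (n + j)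
         = mat_vec n F (\<lambda>l. hk sel k xhat l - x l) j + mat_vec n F (tk sel k xhat) j + e j"
proof -
  let ?xh = "hk sel k xhat" and ?xt = "tk sel k xhat"
  have "xhat = (\<lambda>l. ?xh l + ?xt l)" by (simp add: tk_def)
  then have "mat_vec n F xhat j = mat_vec n F ?xh j + mat_vec n F ?xt j"
    by (metis mv_add)
  then show ?thesis using mv_A[OF j, of F x] j by (simp add: mv_adjA2 mv_diff)
qed

end


lemma coef_mono:
  assumes "0 \<le> C" "real a \<le> A" "real b \<le> B"
  shows "sqrt (C * real a * real b) \<le> sqrt (C * A * B)"
proof -
  have "C * real a * real b \<le> C * A * B"
    using assms by (intro mult_mono) (auto intro: mult_nonneg_nonneg order_trans[OF of_nat_0_le_iff])
  then show ?thesis by (rule real_sqrt_le_mono)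
qed

lemma sq3: fixes a X :: real assumes "0 \<le> a" "0 \<le> X" "a\<^sup>2 \<le> 3 * X\<^sup>2" shows "a \<le> sqrt 3 * X"
proof -
  have "a = sqrt (a\<^sup>2)" using assms by simp
  also have "\<dots> \<le> sqrt (3 * X\<^sup>2)" using assms by (intro real_sqrt_le_mono)
  also have "\<dots> = sqrt 3 * X" using assms by (simp add: real_sqrt_mult)
  finally show ?thesis .
qed

lemma hk_supp: "thr_rule n sel \<Longrightarrow> sel z kk \<subseteq> {..<n} \<and> card (sel z kk) = min kk n"
  unfolding thr_rule_def by blast

lemma coh_adj: "\<forall>i<n. \<forall>j<n. (cmod (F i j))\<^sup>2 \<le> c / real n \<Longrightarrow> \<forall>i<n. \<forall>j<n. (cmod (adj F i j))\<^sup>2 \<le> c / real n"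
  by (simp add: adj_def)

lemma nm_hk: assumes "thr_rule n sel" shows "nm {..<n} (hk sel kk u) = nm (sel u kk) u"
proof -
  have S: "sel u kk \<subseteq> {..<n}" using hk_supp[OF assms] by blast
  have "nm {..<n} (hk sel kk u) = nm (sel u kk) (hk sel kk u)"
    by (rule nm_zero_outside) (use S in \<open>auto simp: hk_def\<close>)
  also have "\<dots> = nm (sel u kk) u" by (rule nm_cong) (simp add: hk_def)
  finally show ?thesis .
qed

definition Zv :: "nat \<Rightarrow> (nat \<Rightarrow> nat \<Rightarrow> complex) \<Rightarrow> (nat \<Rightarrow> complex) \<Rightarrow> (nat \<Rightarrow> complex) \<Rightarrow> (nat \<Rightarrow> complex) \<Rightarrow> (nat \<Rightarrow> complex)" where
  "Zv n F xhat e x = (\<lambda>i. x i + mat_vec n (adj (block_FI n F))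
            (\<lambda>r. (mat_vec n F xhat r + e r) - mat_vec (2 * n) (block_FI n F) x r) i)"

definition Xit where
  "Xit n sel F xhat e k t i = (iht_step n sel (\<lambda>i. mat_vec n F xhat i + e i) (block_FI n F) k t ^^ i) (\<lambda>_. 0)"

lemma Xit_Suc: "Xit n sel F xhat e k t (Suc i) = hkt n sel k t (Zv n F xhat e (Xit n sel F xhat e k t i))"
  by (simp add: Xit_def iht_step_def Zv_def)

lemma Xit_supp:
  assumes sel: "thr_rule n sel" and k: "k \<le> n"
  shows "\<exists>P. P \<subseteq> {..<n} \<and> card P \<le> k \<and> (\<forall>j<n. j \<notin> P \<longrightarrow> Xit n sel F xhat e k t i j = 0)"
    and "\<exists>Q. Q \<subseteq> {..<n} \<and> card Q \<le> t \<and> (\<forall>j<n. j \<notin> Q \<longrightarrow> Xit n sel F xhat e k t i (n + j) = 0)"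
proof -
  have "(\<exists>P. P \<subseteq> {..<n} \<and> card P \<le> k \<and> (\<forall>j<n. j \<notin> P \<longrightarrow> Xit n sel F xhat e k t i j = 0)) \<and>
    (\<exists>Q. Q \<subseteq> {..<n} \<and> card Q \<le> t \<and> (\<forall>j<n. j \<notin> Q \<longrightarrow> Xit n sel F xhat e k t i (n + j) = 0))"
  proof (cases i)
    case 0
    then show ?thesis by (intro conjI exI[of _ "{}"]) (auto simp: Xit_def)
  next
    case (Suc i')
    define z where "z = Zv n F xhat e (Xit n sel F xhat e k t i')"
    have X: "Xit n sel F xhat e k t i = hkt n sel k t z" using Suc by (simp add: Xit_Suc z_def)
    show ?thesis
    proof (intro conjI)
      show "\<exists>P. P \<subseteq> {..<n} \<and> card P \<le> k \<and> (\<forall>j<n. j \<notin> P \<longrightarrow> Xit n sel F xhat e k t i j = 0)"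
        using hk_supp[OF sel, of z k] by (intro exI[of _ "sel z k"]) (auto simp: X hkt1 hk_def)
      show "\<exists>Q. Q \<subseteq> {..<n} \<and> card Q \<le> t \<and> (\<forall>j<n. j \<notin> Q \<longrightarrow> Xit n sel F xhat e k t i (n + j) = 0)"
        using hk_supp[OF sel, of "\<lambda>j. z (n + j)" t]
        by (intro exI[of _ "sel (\<lambda>j. z (n + j)) t"]) (auto simp: X hkt2 hk_def)
    qed
  qed
  then show "\<exists>P. P \<subseteq> {..<n} \<and> card P \<le> k \<and> (\<forall>j<n. j \<notin> P \<longrightarrow> Xit n sel F xhat e k t i j = 0)"
    and "\<exists>Q. Q \<subseteq> {..<n} \<and> card Q \<le> t \<and> (\<forall>j<n. j \<notin> Q \<longrightarrow> Xit n sel F xhat e k t i (n + j) = 0)"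
    by blast+
qed


context
  fixes n k t :: nat and c :: real and F :: "nat \<Rightarrow> nat \<Rightarrow> complex"
    and xhat e :: "nat \<Rightarrow> complex" and sel :: "(nat \<Rightarrow> complex) \<Rightarrow> nat \<Rightarrow> nat set"
  assumes U: "unitary_mat n F" and sel: "thr_rule n sel"
    and coh: "\<forall>i<n. \<forall>j<n. (cmod (F i j))\<^sup>2 \<le> c / real n"
    and c0: "0 \<le> c / real n"
    and kn: "k \<le> n"
begin

lemma S0_props:
  shows "sel xhat k \<subseteq> {..<n}" "card (sel xhat k) \<le> min k n"
    "\<forall>i<n. i \<notin> sel xhat k \<longrightarrow> hk sel k xhat i = 0"
  using hk_supp[OF sel, of xhat k] by (auto simp: hk_def)

lemma stepB1:
  assumes Q: "Q \<subseteq> {..<n}" "card Q \<le> t" "\<forall>j<n. j \<notin> Q \<longrightarrow> x (n + j) = 0"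
  shows "nm {..<n} (\<lambda>j. hkt n sel k t (Zv n F xhat e x) j - hk sel k xhat j)
     \<le> sqrt 3 * (nm {..<n} (\<lambda>r. mat_vec n F (tk sel k xhat) r + e r)
                + sqrt (c / real n * (2 * k) * t) * nm {..<n} (\<lambda>j. x (n + j)))"
proof -
  define u where "u = Zv n F xhat e x"
  define xh where "xh = hk sel k xhat"
  define e' where "e' = (\<lambda>r. mat_vec n F (tk sel k xhat) r + e r)"
  define b where "b = (\<lambda>j. x (n + j))"
  define T1 where "T1 = sel xhat k \<union> sel u k"
  have T1: "T1 \<subseteq> {..<n}" "card T1 \<le> 2 * k"
  proof -
    show "T1 \<subseteq> {..<n}" using S0_props hk_supp[OF sel, of u k] by (auto simp: T1_def)
    have "card T1 \<le> card (sel xhat k) + card (sel u k)" unfolding T1_def by (rule card_Un_le)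
    then show "card T1 \<le> 2 * k" using S0_props hk_supp[OF sel, of u k] by auto
  qed
  have u1: "u j - xh j = mat_vec n (adj F) e' j - mat_vec n (adj F) b j" if "j < n" for j
    using step_z1[OF U that, of x xhat e sel k]
    by (simp add: u_def Zv_def xh_def e'_def b_def flip: mv_diff)
  have "nm {..<n} (\<lambda>j. hkt n sel k t u j - xh j) = nm {..<n} (\<lambda>j. hk sel k u j - xh j)"
    by (rule nm_cong) (simp add: hkt1)
  also have "\<dots> \<le> sqrt 3 * nm T1 (\<lambda>i. u i - xh i)"
  proof (rule sq3)
    show "(nm {..<n} (\<lambda>j. hk sel k u j - xh j))\<^sup>2 \<le> 3 * (nm T1 (\<lambda>i. u i - xh i))\<^sup>2"
      unfolding T1_def xh_def by (rule thr_bound[OF sel S0_props])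
  qed auto
  also have "nm T1 (\<lambda>i. u i - xh i) = nm T1 (\<lambda>i. mat_vec n (adj F) e' i - mat_vec n (adj F) b i)"
    by (rule nm_cong) (use T1 u1 in auto)
  also have "\<dots> \<le> nm T1 (mat_vec n (adj F) e') + nm T1 (mat_vec n (adj F) b)"
    by (rule nm_triangle_diff)
  also have "nm T1 (mat_vec n (adj F) e') \<le> nm {..<n} e'" by (rule duality[OF U T1(1)])
  also have "nm T1 (mat_vec n (adj F) b) \<le> sqrt (c / real n * card T1 * card Q) * nm {..<n} b"
    by (rule coh_bound[OF coh_adj[OF coh] T1(1) Q(1)]) (use Q c0 in \<open>auto simp: b_def\<close>)
  also have "sqrt (c / real n * card T1 * card Q) \<le> sqrt (c / real n * (2 * k) * t)"
    by (rule coef_mono) (use c0 T1 Q in auto)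
  finally show ?thesis by (simp add: u_def xh_def e'_def b_def mult_right_mono)
qed


lemma stepB2:
  assumes P: "P \<subseteq> {..<n}" "card P \<le> k" "\<forall>j<n. j \<notin> P \<longrightarrow> x j = 0"
  shows "nm {..<n} (\<lambda>j. hkt n sel k t (Zv n F xhat e x) (n + j))
     \<le> sqrt (c / real n * t * (2 * k)) * nm {..<n} (\<lambda>j. x j - hk sel k xhat j)
       + nm {..<n} (\<lambda>r. mat_vec n F (tk sel k xhat) r + e r)"
proof -
  define u where "u = Zv n F xhat e x"
  define xh where "xh = hk sel k xhat"
  define e' where "e' = (\<lambda>r. mat_vec n F (tk sel k xhat) r + e r)"
  define u2 where "u2 = (\<lambda>j. u (n + j))"
  define d where "d = (\<lambda>l. xh l - x l)"
  define S where "S = sel u2 t"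
  define P' where "P' = sel xhat k \<union> P"
  have S: "S \<subseteq> {..<n}" "card S \<le> t" using hk_supp[OF sel, of u2 t] by (auto simp: S_def)
  have P': "P' \<subseteq> {..<n}" "card P' \<le> 2 * k"
  proof -
    show "P' \<subseteq> {..<n}" using S0_props P by (auto simp: P'_def)
    have "card P' \<le> card (sel xhat k) + card P" unfolding P'_def by (rule card_Un_le)
    then show "card P' \<le> 2 * k" using S0_props P by auto
  qed
  have u2: "u2 j = mat_vec n F d j + e' j" if "j < n" for j
    using step_z2[OF U that, of x xhat e sel k]
    by (simp add: u_def u2_def Zv_def xh_def e'_def d_def)
  have "nm {..<n} (\<lambda>j. hkt n sel k t u (n + j)) = nm {..<n} (hk sel t u2)"
    by (rule nm_cong) (simp add: hkt2 u2_def)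
  also have "\<dots> = nm S u2" unfolding S_def by (rule nm_hk[OF sel])
  also have "\<dots> = nm S (\<lambda>j. mat_vec n F d j + e' j)" by (rule nm_cong) (use S u2 in auto)
  also have "\<dots> \<le> nm S (mat_vec n F d) + nm S e'" by (rule nm_triangle)
  also have "nm S (mat_vec n F d) \<le> sqrt (c / real n * card S * card P') * nm {..<n} d"
    by (rule coh_bound[OF coh S(1) P'(1)]) (use P S0_props c0 in \<open>auto simp: d_def P'_def xh_def\<close>)
  also have "sqrt (c / real n * card S * card P') \<le> sqrt (c / real n * t * (2 * k))"
    by (rule coef_mono) (use c0 S P' in auto)
  also have "nm S e' \<le> nm {..<n} e'" by (rule nm_subset) (use S in auto)
  also have "nm {..<n} d = nm {..<n} (\<lambda>j. x j - xh j)" unfolding d_def by (rule nm_minus_commute)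
  finally show ?thesis by (simp add: u_def xh_def e'_def mult_right_mono)
qed

end


lemma cmod_add_sq: "(cmod (a + b))\<^sup>2 = (cmod a)\<^sup>2 + (cmod b)\<^sup>2 + 2 * Re (cnj a * b)"
  by (simp only: cmod_power2) (simp add: power2_eq_square algebra_simps)

lemma noise:
  assumes U: "unitary_mat n F" and coh: "\<forall>i<n. \<forall>j<n. (cmod (F i j))\<^sup>2 \<le> c / real n"
    and c0: "0 \<le> c / real n" and T1: "T1 \<subseteq> {..<n}" and T2: "T2 \<subseteq> {..<n}"
  shows "(nm T1 (mat_vec n (adj F) v))\<^sup>2 + (nm T2 v)\<^sup>2
     \<le> (1 + sqrt (c / real n * card T2 * card T1)) * (nm {..<n} v)\<^sup>2"
proof -
  define \<delta> where "\<delta> = sqrt (c / real n * card T2 * card T1)"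
  have "0 \<le> c / real n * card T2 * card T1" by (intro mult_nonneg_nonneg c0) auto
  then have \<delta>0: "0 \<le> \<delta>" unfolding \<delta>_def by (rule real_sqrt_ge_zero)
  define N1 where "N1 = (\<lambda>i. if i \<in> T1 then mat_vec n (adj F) v i else 0)"
  define N2 where "N2 = (\<lambda>i. if i \<in> T2 then v i else 0)"
  define s1 where "s1 = nm {..<n} N1"
  define s2 where "s2 = nm {..<n} N2"
  define W where "W = (\<lambda>r. mat_vec n F N1 r + N2 r)"
  have s1: "s1 = nm T1 (mat_vec n (adj F) v)"
  proof -
    have "s1 = nm T1 N1" unfolding s1_def by (rule nm_zero_outside) (use T1 in \<open>auto simp: N1_def\<close>)
    also have "\<dots> = nm T1 (mat_vec n (adj F) v)" by (rule nm_cong) (simp add: N1_def)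
    finally show ?thesis .
  qed
  have s2: "s2 = nm T2 v" and s2': "s2 = nm T2 N2"
  proof -
    show "s2 = nm T2 N2" unfolding s2_def by (rule nm_zero_outside) (use T2 in \<open>auto simp: N2_def\<close>)
    also have "\<dots> = nm T2 v" by (rule nm_cong) (simp add: N2_def)
    finally show "s2 = nm T2 v" .
  qed
  have c1: "complex_of_real (s1\<^sup>2) = (\<Sum>r<n. cnj (mat_vec n F N1 r) * v r)"
  proof -
    have "complex_of_real (s1\<^sup>2) = (\<Sum>i<n. cnj (N1 i) * mat_vec n (adj F) v i)"
      unfolding s1_def nm_sq_complex by (intro sum.cong) (auto simp: N1_def)
    also have "\<dots> = (\<Sum>r<n. cnj (mat_vec n F N1 r) * v r)" by (rule adj_identity[symmetric])
    finally show ?thesis .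
  qed
  have c2: "complex_of_real (s2\<^sup>2) = (\<Sum>r<n. cnj (N2 r) * v r)"
    unfolding s2_def nm_sq_complex by (intro sum.cong) (auto simp: N2_def)
  have "complex_of_real (s1\<^sup>2 + s2\<^sup>2) = (\<Sum>r<n. cnj (W r) * v r)"
    unfolding of_real_add c1 c2 W_def by (simp add: sum.distrib[symmetric] algebra_simps)
  then have "s1\<^sup>2 + s2\<^sup>2 = Re (\<Sum>r<n. cnj (W r) * v r)" by (metis Re_complex_of_real)
  also have "\<dots> \<le> cmod (\<Sum>r<n. cnj (W r) * v r)" by (rule complex_Re_le_cmod)
  also have "\<dots> \<le> nm {..<n} W * nm {..<n} v" by (rule cs_complex)
  finally have S1: "s1\<^sup>2 + s2\<^sup>2 \<le> nm {..<n} W * nm {..<n} v" .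
  have cross: "Re (\<Sum>r<n. cnj (mat_vec n F N1 r) * N2 r) \<le> \<delta> * s1 * s2"
  proof -
    have eqT: "(\<Sum>r<n. cnj (mat_vec n F N1 r) * N2 r) = (\<Sum>r\<in>T2. cnj (mat_vec n F N1 r) * N2 r)"
      by (rule sum.mono_neutral_right) (use T2 in \<open>auto simp: N2_def\<close>)
    have "Re (\<Sum>r<n. cnj (mat_vec n F N1 r) * N2 r) \<le> cmod (\<Sum>r\<in>T2. cnj (mat_vec n F N1 r) * N2 r)"
      unfolding eqT by (rule complex_Re_le_cmod)
    also have "\<dots> \<le> nm T2 (mat_vec n F N1) * nm T2 N2" by (rule cs_complex)
    also have "nm T2 (mat_vec n F N1) \<le> \<delta> * s1"
      unfolding \<delta>_def s1_def by (rule coh_bound[OF coh T2 T1]) (use c0 in \<open>auto simp: N1_def\<close>)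
    finally show ?thesis using s2' by (simp add: mult_right_mono)
  qed
  have "(nm {..<n} W)\<^sup>2 = (\<Sum>r<n. (cmod (mat_vec n F N1 r))\<^sup>2 + (cmod (N2 r))\<^sup>2
        + 2 * Re (cnj (mat_vec n F N1 r) * N2 r))"
    unfolding nm_sq W_def by (simp add: cmod_add_sq)
  also have "\<dots> = (nm {..<n} (mat_vec n F N1))\<^sup>2 + s2\<^sup>2 + 2 * Re (\<Sum>r<n. cnj (mat_vec n F N1 r) * N2 r)"
    by (simp add: nm_sq s2_def sum.distrib sum_distrib_left Re_sum)
  also have "nm {..<n} (mat_vec n F N1) = s1" unfolding s1_def by (rule unitary_iso[OF U])
  finally have "(nm {..<n} W)\<^sup>2 \<le> s1\<^sup>2 + s2\<^sup>2 + 2 * (\<delta> * s1 * s2)" using cross by linarith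
  also have "2 * (\<delta> * s1 * s2) \<le> \<delta> * (s1\<^sup>2 + s2\<^sup>2)"
  proof -
    have "0 \<le> (s1 - s2)\<^sup>2" by simp
    then have "2 * (s1 * s2) \<le> s1\<^sup>2 + s2\<^sup>2" by (simp add: power2_diff)
    then have "\<delta> * (2 * (s1 * s2)) \<le> \<delta> * (s1\<^sup>2 + s2\<^sup>2)" using \<delta>0 by (rule mult_left_mono)
    then show ?thesis by (simp add: mult_ac)
  qed
  finally have W2: "(nm {..<n} W)\<^sup>2 \<le> (1 + \<delta>) * (s1\<^sup>2 + s2\<^sup>2)" by (simp add: algebra_simps)
  define S where "S = s1\<^sup>2 + s2\<^sup>2"
  have S0: "0 \<le> S" by (simp add: S_def)
  have "S\<^sup>2 \<le> (nm {..<n} W * nm {..<n} v)\<^sup>2" using S1 S0 by (simp add: S_def power_mono)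
  also have "\<dots> = (nm {..<n} W)\<^sup>2 * (nm {..<n} v)\<^sup>2" by (simp add: power_mult_distrib)
  also have "\<dots> \<le> (1 + \<delta>) * S * (nm {..<n} v)\<^sup>2" using W2 by (simp add: S_def mult_right_mono)
  finally have "S * S \<le> S * ((1 + \<delta>) * (nm {..<n} v)\<^sup>2)" by (simp add: power2_eq_square mult_ac)
  then have "S \<le> (1 + \<delta>) * (nm {..<n} v)\<^sup>2"
    using S0 by (cases "S = 0") (auto simp: \<delta>0)
  then show ?thesis by (simp add: S_def s1 s2 \<delta>_def)
qed


context
  fixes n k t :: nat and c :: real and F :: "nat \<Rightarrow> nat \<Rightarrow> complex"
    and xhat e :: "nat \<Rightarrow> complex" and sel :: "(nat \<Rightarrow> complex) \<Rightarrow> nat \<Rightarrow> nat set"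
  assumes U: "unitary_mat n F" and sel: "thr_rule n sel"
    and coh: "\<forall>i<n. \<forall>j<n. (cmod (F i j))\<^sup>2 \<le> c / real n"
    and c0: "0 \<le> c / real n"
    and kn: "k \<le> n"
    and sparse: "card {i. i < n \<and> e i \<noteq> 0} \<le> t"
begin

lemma stepA:
  assumes P: "P \<subseteq> {..<n}" "card P \<le> k" "\<forall>j<n. j \<notin> P \<longrightarrow> x j = 0"
    and Q: "Q \<subseteq> {..<n}" "card Q \<le> t" "\<forall>j<n. j \<notin> Q \<longrightarrow> x (n + j) = 0"
  shows "sqrt ((nm {..<n} (\<lambda>j. hkt n sel k t (Zv n F xhat e x) j - hk sel k xhat j))\<^sup>2
             + (nm {..<n} (\<lambda>j. hkt n sel k t (Zv n F xhat e x) (n + j) - e j))\<^sup>2)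
     \<le> sqrt 3 * (sqrt (c / real n * (2 * k) * (2 * t)) *
            sqrt ((nm {..<n} (\<lambda>j. x j - hk sel k xhat j))\<^sup>2 + (nm {..<n} (\<lambda>j. x (n + j) - e j))\<^sup>2)
          + sqrt (1 + sqrt (c / real n * (2 * k) * (2 * t))) * nm {..<n} (tk sel k xhat))"
proof -
  define u where "u = Zv n F xhat e x"
  define xh where "xh = hk sel k xhat"
  define xt where "xt = tk sel k xhat"
  define e'' where "e'' = mat_vec n F xt"
  define u2 where "u2 = (\<lambda>j. u (n + j))"
  define Se where "Se = {i. i < n \<and> e i \<noteq> 0}"
  define T1 where "T1 = sel xhat k \<union> sel u k"
  define T2 where "T2 = Se \<union> sel u2 t"
  define P' where "P' = sel xhat k \<union> P"
  define Q' where "Q' = Se \<union> Q"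
  define \<delta> where "\<delta> = sqrt (c / real n * (2 * k) * (2 * t))"
  define D where "D = nm {..<n} (\<lambda>j. x j - xh j)"
  define G where "G = nm {..<n} (\<lambda>j. x (n + j) - e j)"
  have "0 \<le> c / real n * (2 * k) * (2 * t)" by (intro mult_nonneg_nonneg c0) auto
  then have \<delta>0: "0 \<le> \<delta>" unfolding \<delta>_def by (rule real_sqrt_ge_zero)
  have Se: "Se \<subseteq> {..<n}" "card Se \<le> t" "card Se \<le> min t n"
  proof -
    show "Se \<subseteq> {..<n}" by (auto simp: Se_def)
    then have "card Se \<le> n" by (metis card_lessThan card_mono finite_lessThan)
    then show "card Se \<le> t" "card Se \<le> min t n" using sparse by (auto simp: Se_def)
  qed
  have T1: "T1 \<subseteq> {..<n}" "card T1 \<le> 2 * k"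
  proof -
    show "T1 \<subseteq> {..<n}" using S0_props[OF U sel coh c0 kn, where xhat=xhat] hk_supp[OF sel, of u k] by (auto simp: T1_def)
    have "card T1 \<le> card (sel xhat k) + card (sel u k)" unfolding T1_def by (rule card_Un_le)
    then show "card T1 \<le> 2 * k" using S0_props[OF U sel coh c0 kn, where xhat=xhat] hk_supp[OF sel, of u k] kn by auto
  qed
  have T2: "T2 \<subseteq> {..<n}" "card T2 \<le> 2 * t"
  proof -
    show "T2 \<subseteq> {..<n}" using Se hk_supp[OF sel, of u2 t] by (auto simp: T2_def)
    have "card T2 \<le> card Se + card (sel u2 t)" unfolding T2_def by (rule card_Un_le)
    then show "card T2 \<le> 2 * t" using Se hk_supp[OF sel, of u2 t] by auto
  qed
  have P': "P' \<subseteq> {..<n}" "card P' \<le> 2 * k"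
  proof -
    show "P' \<subseteq> {..<n}" using S0_props[OF U sel coh c0 kn, where xhat=xhat] P by (auto simp: P'_def)
    have "card P' \<le> card (sel xhat k) + card P" unfolding P'_def by (rule card_Un_le)
    then show "card P' \<le> 2 * k" using S0_props[OF U sel coh c0 kn, where xhat=xhat] P kn by auto
  qed
  have Q': "Q' \<subseteq> {..<n}" "card Q' \<le> 2 * t"
  proof -
    show "Q' \<subseteq> {..<n}" using Se Q by (auto simp: Q'_def)
    have "card Q' \<le> card Se + card Q" unfolding Q'_def by (rule card_Un_le)
    then show "card Q' \<le> 2 * t" using Se Q by auto
  qed
  have u1: "u j - xh j = mat_vec n (adj F) (\<lambda>r. e r - x (n + r)) j + mat_vec n (adj F) e'' j"
    if "j < n" for j
  proof -
    have "u j - xh j = mat_vec n (adj F) (\<lambda>r. mat_vec n F xt r + e r - x (n + r)) j"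
      using step_z1[OF U that, of x xhat e sel k] by (simp add: u_def Zv_def xh_def xt_def)
    also have "(\<lambda>r. mat_vec n F xt r + e r - x (n + r)) = (\<lambda>r. (e r - x (n + r)) + e'' r)"
      by (auto simp: e''_def)
    finally show ?thesis by (simp add: mv_add)
  qed
  have u2e: "u2 j - e j = mat_vec n F (\<lambda>l. xh l - x l) j + e'' j" if "j < n" for j
    using step_z2[OF U that, of x xhat e sel k]
    by (simp add: u_def u2_def Zv_def xh_def e''_def xt_def)
  define m1 where "m1 = nm T1 (mat_vec n (adj F) (\<lambda>r. e r - x (n + r)))"
  define p1 where "p1 = nm T1 (mat_vec n (adj F) e'')"
  define m2 where "m2 = nm T2 (mat_vec n F (\<lambda>l. xh l - x l))"
  define p2 where "p2 = nm T2 e''"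
  define D' where "D' = nm {..<n} (\<lambda>j. hkt n sel k t u j - xh j)"
  define G' where "G' = nm {..<n} (\<lambda>j. hkt n sel k t u (n + j) - e j)"
  have D': "D' \<le> sqrt 3 * (m1 + p1)"
  proof -
    have "D' = nm {..<n} (\<lambda>j. hk sel k u j - xh j)"
      unfolding D'_def by (rule nm_cong) (simp add: hkt1)
    also have "\<dots> \<le> sqrt 3 * nm T1 (\<lambda>i. u i - xh i)"
    proof (rule sq3)
      show "(nm {..<n} (\<lambda>j. hk sel k u j - xh j))\<^sup>2 \<le> 3 * (nm T1 (\<lambda>i. u i - xh i))\<^sup>2"
        unfolding T1_def xh_def by (rule thr_bound[OF sel S0_props[OF U sel coh c0 kn, where xhat=xhat]])
    qed auto
    also have "nm T1 (\<lambda>i. u i - xh i) = nm T1 (\<lambda>i. mat_vec n (adj F) (\<lambda>r. e r - x (n + r)) i + mat_vec n (adj F) e'' i)"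
      by (rule nm_cong) (use T1 u1 in auto)
    also have "\<dots> \<le> m1 + p1" unfolding m1_def p1_def by (rule nm_triangle)
    finally show ?thesis by (simp add: mult_left_mono)
  qed
  have G': "G' \<le> sqrt 3 * (m2 + p2)"
  proof -
    have "G' = nm {..<n} (\<lambda>j. hk sel t u2 j - e j)"
      unfolding G'_def by (rule nm_cong) (simp add: hkt2 u2_def)
    also have "\<dots> \<le> sqrt 3 * nm T2 (\<lambda>i. u2 i - e i)"
    proof (rule sq3)
      show "(nm {..<n} (\<lambda>j. hk sel t u2 j - e j))\<^sup>2 \<le> 3 * (nm T2 (\<lambda>i. u2 i - e i))\<^sup>2"
        unfolding T2_def by (rule thr_bound[OF sel Se(1) Se(3)]) (auto simp: Se_def)
    qed auto
    also have "nm T2 (\<lambda>i. u2 i - e i) = nm T2 (\<lambda>i. mat_vec n F (\<lambda>l. xh l - x l) i + e'' i)"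
      by (rule nm_cong) (use T2 u2e in auto)
    also have "\<dots> \<le> m2 + p2" unfolding m2_def p2_def by (rule nm_triangle)
    finally show ?thesis by (simp add: mult_left_mono)
  qed
  have m1: "m1 \<le> \<delta> * G"
  proof -
    have "m1 \<le> sqrt (c / real n * card T1 * card Q') * nm {..<n} (\<lambda>r. e r - x (n + r))"
      unfolding m1_def
      by (rule coh_bound[OF coh_adj[OF coh] T1(1) Q'(1)]) (use Q c0 in \<open>auto simp: Q'_def Se_def\<close>)
    also have "sqrt (c / real n * card T1 * card Q') \<le> \<delta>"
      unfolding \<delta>_def by (rule coef_mono) (use c0 T1 Q' in auto)
    also have "nm {..<n} (\<lambda>r. e r - x (n + r)) = G" unfolding G_def by (rule nm_minus_commute)
    finally show ?thesis by (simp add: mult_right_mono)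
  qed
  have m2: "m2 \<le> \<delta> * D"
  proof -
    have "m2 \<le> sqrt (c / real n * card T2 * card P') * nm {..<n} (\<lambda>l. xh l - x l)"
      unfolding m2_def
      by (rule coh_bound[OF coh T2(1) P'(1)]) (use P S0_props[OF U sel coh c0 kn, where xhat=xhat] c0 in \<open>auto simp: P'_def xh_def\<close>)
    also have "sqrt (c / real n * card T2 * card P') \<le> sqrt (c / real n * (2 * t) * (2 * k))"
      by (rule coef_mono) (use c0 T2 P' in auto)
    also have "\<dots> = \<delta>" unfolding \<delta>_def by (simp add: mult_ac)
    also have "nm {..<n} (\<lambda>l. xh l - x l) = D" unfolding D_def by (rule nm_minus_commute)
    finally show ?thesis by (simp add: mult_right_mono)
  qed
  have noi: "p1\<^sup>2 + p2\<^sup>2 \<le> (1 + \<delta>) * (nm {..<n} xt)\<^sup>2"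
  proof -
    have "p1\<^sup>2 + p2\<^sup>2 \<le> (1 + sqrt (c / real n * card T2 * card T1)) * (nm {..<n} e'')\<^sup>2"
      unfolding p1_def p2_def by (rule noise[OF U coh c0 T1(1) T2(1)])
    also have "sqrt (c / real n * card T2 * card T1) \<le> \<delta>"
    proof -
      have "sqrt (c / real n * card T2 * card T1) \<le> sqrt (c / real n * (2 * t) * (2 * k))"
        by (rule coef_mono) (use c0 T2 T1 in auto)
      also have "\<dots> = \<delta>" unfolding \<delta>_def by (simp add: mult_ac)
      finally show ?thesis .
    qed
    also have "nm {..<n} e'' = nm {..<n} xt" unfolding e''_def by (rule unitary_iso[OF U])
    finally show ?thesis by (simp add: mult_right_mono)
  qed
  have nn: "0 \<le> m1" "0 \<le> m2" "0 \<le> p1" "0 \<le> p2" "0 \<le> D'" "0 \<le> G'"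
    by (simp_all add: m1_def m2_def p1_def p2_def D'_def G'_def)
  have "sqrt (D'\<^sup>2 + G'\<^sup>2) \<le> sqrt ((sqrt 3 * (m1 + p1))\<^sup>2 + (sqrt 3 * (m2 + p2))\<^sup>2)"
    using D' G' nn by (intro real_sqrt_le_mono add_mono power_mono) auto
  also have "\<dots> = sqrt (3 * ((m1 + p1)\<^sup>2 + (m2 + p2)\<^sup>2))"
  proof -
    have h: "\<And>a::real. (sqrt 3 * a)\<^sup>2 = 3 * a\<^sup>2" by (simp add: power_mult_distrib)
    show ?thesis by (simp only: h, simp only: distrib_left)
  qed
  also have "\<dots> = sqrt 3 * sqrt ((m1 + p1)\<^sup>2 + (m2 + p2)\<^sup>2)"
    by (rule real_sqrt_mult)
  also have "sqrt ((m1 + p1)\<^sup>2 + (m2 + p2)\<^sup>2) \<le> sqrt (m1\<^sup>2 + m2\<^sup>2) + sqrt (p1\<^sup>2 + p2\<^sup>2)"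
    by (rule real_sqrt_sum_squares_triangle_ineq)
  also have "sqrt (m1\<^sup>2 + m2\<^sup>2) \<le> \<delta> * sqrt (D\<^sup>2 + G\<^sup>2)"
  proof -
    have "sqrt (m1\<^sup>2 + m2\<^sup>2) \<le> sqrt ((\<delta> * G)\<^sup>2 + (\<delta> * D)\<^sup>2)"
      using m1 m2 nn by (intro real_sqrt_le_mono add_mono power_mono) auto
    also have "\<dots> = sqrt (\<delta>\<^sup>2 * (D\<^sup>2 + G\<^sup>2))"
      by (simp add: power_mult_distrib algebra_simps)
    also have "\<dots> = \<delta> * sqrt (D\<^sup>2 + G\<^sup>2)"
      using \<delta>0 by (simp only: real_sqrt_mult real_sqrt_abs abs_of_nonneg)
    finally show ?thesis .
  qed
  also have "sqrt (p1\<^sup>2 + p2\<^sup>2) \<le> sqrt (1 + \<delta>) * nm {..<n} xt"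
  proof -
    have "sqrt (p1\<^sup>2 + p2\<^sup>2) \<le> sqrt ((1 + \<delta>) * (nm {..<n} xt)\<^sup>2)" using noi by (rule real_sqrt_le_mono)
    also have "\<dots> = sqrt (1 + \<delta>) * nm {..<n} xt" by (simp add: real_sqrt_mult)
    finally show ?thesis .
  qed
  finally show ?thesis
    by (simp add: D'_def G'_def u_def xh_def D_def G_def \<delta>_def xt_def mult_left_mono)
qed

end


lemma eps_part:
  fixes \<rho> R K err \<epsilon> :: real
  assumes "0 < \<rho>" "\<rho> < 1" "0 < \<epsilon>" "0 \<le> R"
    and T: "real T \<ge> (ln (1 / \<epsilon>) + ln R) / ln (1 / \<rho>)"
    and err: "err \<le> \<rho> ^ (T + 1) * R + K"
  shows "err \<le> K + \<epsilon>"
proof (cases "R = 0")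
  case True then show ?thesis using err assms by simp
next
  case False
  then have R: "0 < R" using assms by simp
  have l: "0 < ln (1 / \<rho>)" using assms by simp
  have "ln (1 / \<epsilon>) + ln R \<le> real T * ln (1 / \<rho>)"
    using T l by (simp add: divide_le_eq)
  then have "ln R + real T * ln \<rho> \<le> ln \<epsilon>"
    using assms by (simp add: ln_div)
  moreover have "ln (\<rho> ^ T * R) = real T * ln \<rho> + ln R"
    using assms R by (simp add: ln_mult ln_realpow)
  ultimately have "ln (\<rho> ^ T * R) \<le> ln \<epsilon>" by simp
  then have "\<rho> ^ T * R \<le> \<epsilon>" using assms R by simp
  moreover have "\<rho> ^ (T + 1) * R \<le> \<rho> ^ T * R"
    using assms R by (simp add: mult_right_mono mult_left_le_one_le)
  ultimately show ?thesis using err by linarith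
qed

context
  fixes n k t :: nat and c :: real and F :: "nat \<Rightarrow> nat \<Rightarrow> complex"
    and xhat e :: "nat \<Rightarrow> complex" and sel :: "(nat \<Rightarrow> complex) \<Rightarrow> nat \<Rightarrow> nat set"
  assumes U: "unitary_mat n F" and sel: "thr_rule n sel"
    and coh: "\<forall>i<n. \<forall>j<n. (cmod (F i j))\<^sup>2 \<le> c / real n"
    and c: "0 < c" and n: "1 \<le> n"
    and kn: "k \<le> n"
    and sparse: "card {i. i < n \<and> e i \<noteq> 0} \<le> t"
begin

lemma c0': "0 \<le> c / real n" using c by simp

lemma mu4: "c / real n * (2 * k) * (2 * t) = 4 * (c * real k * real t / real n)"
  by (simp add: field_simps)

lemma mu2: "c / real n * (2 * k) * t = 2 * (c * real k * real t / real n)"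
  by (simp add: field_simps)

lemma partA:
  assumes \<rho>: "0 < sqrt 27 * sqrt (c * real k * real t / real n)" "sqrt 27 * sqrt (c * real k * real t / real n) < 1"
  shows "nm {..<n} (\<lambda>j. Xit n sel F xhat e k t (Suc T) j - hk sel k xhat j)
    \<le> (sqrt 27 * sqrt (c * real k * real t / real n)) ^ (T + 1)
          * sqrt ((nm {..<n} (hk sel k xhat))\<^sup>2 + (nm {..<n} e)\<^sup>2)
      + (sqrt 3 * sqrt (1 + 2 * sqrt (c * real k * real t / real n)) / (1 - sqrt 27 * sqrt (c * real k * real t / real n)))
          * nm {..<n} (tk sel k xhat)"
proof -
  define \<mu> where "\<mu> = c * real k * real t / real n"
  define \<rho> where "\<rho> = sqrt 27 * sqrt \<mu>"
  define \<tau> where "\<tau> = sqrt 3 * sqrt (1 + 2 * sqrt \<mu>) / (1 - \<rho>)"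
  define R where "R = sqrt ((nm {..<n} (hk sel k xhat))\<^sup>2 + (nm {..<n} e)\<^sup>2)"
  define tl where "tl = nm {..<n} (tk sel k xhat)"
  define X where "X = Xit n sel F xhat e k t"
  define Ea where "Ea i = sqrt ((nm {..<n} (\<lambda>j. X i j - hk sel k xhat j))\<^sup>2 + (nm {..<n} (\<lambda>j. X i (n + j) - e j))\<^sup>2)" for i
  have \<mu>0: "0 \<le> \<mu>" using c by (simp add: \<mu>_def)
  have \<rho>01: "0 < \<rho>" "\<rho> < 1" using \<rho> by (simp_all add: \<rho>_def \<mu>_def)
  have \<tau>eq: "\<tau> * (1 - \<rho>) = sqrt 3 * sqrt (1 + 2 * sqrt \<mu>)" using \<rho>01 by (simp add: \<tau>_def)
  have \<tau>0: "0 \<le> \<tau>" using \<rho>01 \<mu>0 by (simp add: \<tau>_def)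
  have tl0: "0 \<le> tl" by (simp add: tl_def)
  have step: "Ea (Suc i) \<le> \<rho> * Ea i + \<tau> * (1 - \<rho>) * tl" for i
  proof -
    obtain P where P: "P \<subseteq> {..<n}" "card P \<le> k" "\<forall>j<n. j \<notin> P \<longrightarrow> X i j = 0"
      using Xit_supp(1)[OF sel kn] unfolding X_def by blast
    obtain Q where Q: "Q \<subseteq> {..<n}" "card Q \<le> t" "\<forall>j<n. j \<notin> Q \<longrightarrow> X i (n + j) = 0"
      using Xit_supp(2)[OF sel kn] unfolding X_def by blast
    have "Ea (Suc i) \<le> sqrt 3 * (sqrt (c / real n * (2 * k) * (2 * t)) * Ea i
          + sqrt (1 + sqrt (c / real n * (2 * k) * (2 * t))) * tl)"
      unfolding Ea_def X_def Xit_Suc tl_def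
      by (rule stepA[OF U sel coh c0' kn sparse]) (use P Q in \<open>auto simp: X_def\<close>)
    also have "sqrt (c / real n * (2 * k) * (2 * t)) = 2 * sqrt \<mu>"
      unfolding mu4 \<mu>_def[symmetric] by (simp only: real_sqrt_mult real_sqrt_four)
    finally have "Ea (Suc i) \<le> sqrt 3 * (2 * sqrt \<mu>) * Ea i + sqrt 3 * sqrt (1 + 2 * sqrt \<mu>) * tl"
      by (simp add: algebra_simps)
    moreover have "sqrt 3 * (2 * sqrt \<mu>) \<le> \<rho>"
    proof -
      have "sqrt 3 * (2 * sqrt \<mu>) = sqrt 4 * sqrt 3 * sqrt \<mu>" by simp
      also have "\<dots> = sqrt (4 * 3 * \<mu>)" by (simp only: real_sqrt_mult)
      also have "\<dots> \<le> sqrt (27 * \<mu>)" using \<mu>0 by (intro real_sqrt_le_mono) simp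
      also have "\<dots> = \<rho>" unfolding \<rho>_def by (rule real_sqrt_mult)
      finally show ?thesis .
    qed
    moreover have "0 \<le> Ea i" by (simp add: Ea_def)
    ultimately have "Ea (Suc i) \<le> \<rho> * Ea i + sqrt 3 * sqrt (1 + 2 * sqrt \<mu>) * tl"
      using mult_right_mono[of "sqrt 3 * (2 * sqrt \<mu>)" \<rho> "Ea i"] by linarith
    then show ?thesis using \<tau>eq by simp
  qed
  have main: "Ea i \<le> \<rho> ^ i * R + \<tau> * tl" for i
  proof (induction i)
    case 0
    have "Ea 0 = R"
      by (simp add: Ea_def R_def X_def Xit_def nm_def)
    then show ?case using \<tau>0 tl0 by simp
  next
    case (Suc i)
    have "Ea (Suc i) \<le> \<rho> * Ea i + \<tau> * (1 - \<rho>) * tl" by (rule step)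
    also have "\<dots> \<le> \<rho> * (\<rho> ^ i * R + \<tau> * tl) + \<tau> * (1 - \<rho>) * tl"
      using Suc \<rho>01 by (simp add: mult_left_mono)
    also have "\<dots> = \<rho> ^ Suc i * R + \<tau> * tl" by (simp add: algebra_simps)
    finally show ?case .
  qed
  have "nm {..<n} (\<lambda>j. X (Suc T) j - hk sel k xhat j) \<le> Ea (Suc T)"
    unfolding Ea_def by (rule real_le_rsqrt) simp
  also have "\<dots> \<le> \<rho> ^ (T + 1) * R + \<tau> * tl" using main[of "Suc T"] by simp
  finally show ?thesis by (simp add: X_def \<rho>_def \<mu>_def R_def \<tau>_def tl_def)
qed


lemma partB:
  assumes \<rho>: "0 < 2 * sqrt 2 * sqrt (c * real k * real t / real n)" "2 * sqrt 2 * sqrt (c * real k * real t / real n) < 1"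
  shows "nm {..<n} (\<lambda>j. Xit n sel F xhat e k t (Suc T) j - hk sel k xhat j)
    \<le> (2 * sqrt 2 * sqrt (c * real k * real t / real n)) ^ (T + 1) * nm {..<n} (hk sel k xhat)
      + (2 / (1 - 2 * sqrt 2 * sqrt (c * real k * real t / real n)))
          * (nm {..<n} (tk sel k xhat) + nm {..<n} e)"
proof -
  define \<mu> where "\<mu> = c * real k * real t / real n"
  define \<rho> where "\<rho> = 2 * sqrt 2 * sqrt \<mu>"
  define \<tau> where "\<tau> = 2 / (1 - \<rho>)"
  define R where "R = nm {..<n} (hk sel k xhat)"
  define E where "E = nm {..<n} (\<lambda>r. mat_vec n F (tk sel k xhat) r + e r)"
  define X where "X = Xit n sel F xhat e k t"
  define D where "D i = nm {..<n} (\<lambda>j. X i j - hk sel k xhat j)" for i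
  define B where "B i = nm {..<n} (\<lambda>j. X i (n + j))" for i
  have \<mu>0: "0 \<le> \<mu>" using c by (simp add: \<mu>_def)
  have \<rho>01: "0 < \<rho>" "\<rho> < 1" using \<rho> by (simp_all add: \<rho>_def \<mu>_def)
  have \<tau>eq: "\<tau> * (1 - \<rho>) = 2" using \<rho>01 by (simp add: \<tau>_def field_simps)
  have \<tau>0: "0 \<le> \<tau>" using \<rho>01 by (simp add: \<tau>_def)
  have E0: "0 \<le> E" by (simp add: E_def)
  have R0: "0 \<le> R" by (simp add: R_def)
  have s: "sqrt (c / real n * (2 * k) * t) = \<rho> / 2"
  proof -
    have "sqrt (c / real n * (2 * k) * t) = sqrt 2 * sqrt \<mu>"
      unfolding mu2 \<mu>_def[symmetric] by (rule real_sqrt_mult)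
    then show ?thesis by (simp add: \<rho>_def)
  qed
  have s': "sqrt (c / real n * t * (2 * k)) = \<rho> / 2"
    using s by (simp add: mult_ac)
  have s3: "sqrt 3 * (\<rho> / 2) \<le> \<rho>"
  proof -
    have "sqrt 3 \<le> 2" using real_sqrt_le_mono[of 3 4] by simp
    then show ?thesis using \<rho>01 by (simp add: mult_right_mono)
  qed
  have sqrt3: "sqrt 3 \<le> (2::real)" using real_sqrt_le_mono[of 3 4] by simp
  have stepD: "D (Suc i) \<le> 2 * E + \<rho> * B i" for i
  proof -
    obtain Q where Q: "Q \<subseteq> {..<n}" "card Q \<le> t" "\<forall>j<n. j \<notin> Q \<longrightarrow> X i (n + j) = 0"
      using Xit_supp(2)[OF sel kn] unfolding X_def by blast
    have "D (Suc i) \<le> sqrt 3 * (E + sqrt (c / real n * (2 * k) * t) * B i)"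
      unfolding D_def X_def Xit_Suc E_def B_def
      by (rule stepB1[OF U sel coh c0' kn]) (use Q in \<open>auto simp: X_def\<close>)
    also have "\<dots> = sqrt 3 * E + sqrt 3 * (\<rho> / 2) * B i" by (simp only: s, simp only: distrib_left mult.assoc)
    also have "\<dots> \<le> 2 * E + \<rho> * B i"
      using sqrt3 s3 E0 by (intro add_mono mult_right_mono) (auto simp: B_def)
    finally show ?thesis .
  qed
  have stepB: "B (Suc i) \<le> (\<rho> / 2) * D i + E" for i
  proof -
    obtain P where P: "P \<subseteq> {..<n}" "card P \<le> k" "\<forall>j<n. j \<notin> P \<longrightarrow> X i j = 0"
      using Xit_supp(1)[OF sel kn] unfolding X_def by blast
    have "B (Suc i) \<le> sqrt (c / real n * t * (2 * k)) * D i + E"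
      unfolding D_def X_def Xit_Suc E_def B_def
      by (rule stepB2[OF U sel coh c0' kn]) (use P in \<open>auto simp: X_def\<close>)
    then show ?thesis by (simp only: s')
  qed
  have main: "D i \<le> \<rho> ^ i * R + \<tau> * E \<and> B i \<le> \<rho> ^ i * R + \<tau> * E" for i
  proof (induction i)
    case 0
    have "D 0 = R" by (simp add: D_def R_def X_def Xit_def nm_def)
    moreover have "B 0 = 0" by (simp add: B_def X_def Xit_def nm_def L2_set_def)
    ultimately show ?case using \<tau>0 E0 R0 by simp
  next
    case (Suc i)
    then have IH1: "D i \<le> \<rho> ^ i * R + \<tau> * E" and IH2: "B i \<le> \<rho> ^ i * R + \<tau> * E" by auto
    have "D (Suc i) \<le> 2 * E + \<rho> * B i" by (rule stepD)
    also have "\<dots> \<le> 2 * E + \<rho> * (\<rho> ^ i * R + \<tau> * E)"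
      using IH2 \<rho>01 by (simp add: mult_left_mono)
    also have "\<dots> = \<rho> ^ Suc i * R + (2 + \<rho> * \<tau>) * E" by (simp add: algebra_simps)
    also have "2 + \<rho> * \<tau> = \<tau>" using \<tau>eq by (simp add: algebra_simps)
    finally have A1: "D (Suc i) \<le> \<rho> ^ Suc i * R + \<tau> * E" .
    have "B (Suc i) \<le> (\<rho> / 2) * D i + E" by (rule stepB)
    also have "\<dots> \<le> (\<rho> / 2) * (\<rho> ^ i * R + \<tau> * E) + E"
      using IH1 \<rho>01 by (simp add: mult_left_mono)
    also have "\<dots> = (1 / 2) * (\<rho> ^ Suc i * R) + (\<rho> * \<tau> / 2 + 1) * E" by (simp add: algebra_simps)
    also have "\<dots> \<le> \<rho> ^ Suc i * R + \<tau> * E"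
    proof (intro add_mono mult_right_mono)
      show "1 / 2 * (\<rho> ^ Suc i * R) \<le> \<rho> ^ Suc i * R" using \<rho>01 R0 by simp
      show "\<rho> * \<tau> / 2 + 1 \<le> \<tau>" using \<tau>eq \<rho>01 \<tau>0 by (simp add: algebra_simps)
    qed (rule E0)
    finally show ?case using A1 by simp
  qed
  have "E \<le> nm {..<n} (mat_vec n F (tk sel k xhat)) + nm {..<n} e"
    unfolding E_def by (rule nm_triangle)
  also have "nm {..<n} (mat_vec n F (tk sel k xhat)) = nm {..<n} (tk sel k xhat)" by (rule unitary_iso[OF U])
  finally have E1: "E \<le> nm {..<n} (tk sel k xhat) + nm {..<n} e" .
  have "D (Suc T) \<le> \<rho> ^ (T + 1) * R + \<tau> * E" using main[of "Suc T"] by simp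
  also have "\<dots> \<le> \<rho> ^ (T + 1) * R + \<tau> * (nm {..<n} (tk sel k xhat) + nm {..<n} e)"
    using E1 \<tau>0 by (simp add: mult_left_mono)
  finally show ?thesis by (simp add: D_def X_def \<rho>_def \<mu>_def R_def \<tau>_def)
qed

end


lemma combine:
  fixes \<rho> R K err :: real
  assumes "0 < \<rho> \<and> \<rho> < 1 \<Longrightarrow> err \<le> \<rho> ^ (T + 1) * R + K" "0 \<le> R"
  shows "0 < \<rho> \<and> \<rho> < 1 \<longrightarrow> err \<le> \<rho> ^ (T + 1) * R + K \<and>
     (\<forall>\<epsilon>. 0 < \<epsilon> \<and> \<epsilon> < 1 \<and> real T \<ge> (ln (1 / \<epsilon>) + ln R) / ln (1 / \<rho>) \<longrightarrow> err \<le> K + \<epsilon>)"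
  using assms eps_part[of \<rho> _ R T] by blast

lemma IHT_Xit: "IHT n sel (\<lambda>i. mat_vec n F xhat i + e i) (block_FI n F) k t T = Xit n sel F xhat e k t (Suc T)"
  by (simp add: IHT_def Xit_def)

theorem theorem1:
  fixes n k t T :: nat and c :: real
    and F :: "nat \<Rightarrow> nat \<Rightarrow> complex"
    and xhat e :: "nat \<Rightarrow> complex"
    and sel :: "(nat \<Rightarrow> complex) \<Rightarrow> nat \<Rightarrow> nat set"
  assumes n: "n \<ge> 1"
    and sel: "thr_rule n sel"
    and unitary: "unitary_mat n F"
    and c: "c > 0"
    and coh: "\<forall>i<n. \<forall>j<n. (cmod (F i j))\<^sup>2 \<le> c / real n"
    and sparse: "card {i. i < n \<and> e i \<noteq> 0} \<le> t"
    and t: "t \<ge> 1"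
    and k: "1 \<le> k" "k \<le> n"
    and T: "T \<ge> 1"
  shows
   "(let y = (\<lambda>i. mat_vec n F xhat i + e i);
         A = block_FI n F;
         xT = (\<lambda>i. IHT n sel y A k t T i);
         err = l2norm n (\<lambda>i. xT i - hk sel k xhat i);
         \<mu> = c * real k * real t / real n;
         \<rho>a = sqrt 27 * sqrt \<mu>;
         \<tau>a = sqrt 3 * sqrt (1 + 2 * sqrt \<mu>) / (1 - \<rho>a);
         \<rho>b = 2 * sqrt 2 * sqrt \<mu>;
         \<tau>b = 2 / (1 - \<rho>b);
         Ra = sqrt ((l2norm n (hk sel k xhat))\<^sup>2 + (l2norm n e)\<^sup>2);
         Rb = l2norm n (hk sel k xhat);
         tl = l2norm n (tk sel k xhat)
     in (0 < \<rho>a \<and> \<rho>a < 1 \<longrightarrow>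
           err \<le> \<rho>a ^ (T + 1) * Ra + \<tau>a * tl \<and>
           (\<forall>\<epsilon>. 0 < \<epsilon> \<and> \<epsilon> < 1 \<and> real T \<ge> (ln (1 / \<epsilon>) + ln Ra) / ln (1 / \<rho>a)
                 \<longrightarrow> err \<le> \<tau>a * tl + \<epsilon>))
      \<and> (0 < \<rho>b \<and> \<rho>b < 1 \<longrightarrow>
           err \<le> \<rho>b ^ (T + 1) * Rb + \<tau>b * (tl + l2norm n e) \<and>
           (\<forall>\<epsilon>. 0 < \<epsilon> \<and> \<epsilon> < 1 \<and> real T \<ge> (ln (1 / \<epsilon>) + ln Rb) / ln (1 / \<rho>b)
                 \<longrightarrow> err \<le> \<tau>b * (tl + l2norm n e) + \<epsilon>)))"
  unfolding Let_def IHT_Xit l2norm_nm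
  apply (intro conjI combine)
     apply (rule partA[OF unitary sel coh c n k(2) sparse]; simp)
    apply simp
   apply (rule partB[OF unitary sel coh c n k(2) sparse]; simp)
  apply simp
  done

end
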